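(* The function $m\mapsto\bar\mu_\infty(m)$ is continuous, non-decreasing and strictly concave on $[0,\bar\pi]$.
   Context: $\lambda_L,\lambda_G,\gamma>0$; $\pi$ a probability distribution on $\mathbb N$ with mean $\bar\pi<\infty$. For constant $m\in[0,\bar\pi]$ the forced process solves $X_t(m) = X_0 + P_{inf}\big( \int_{0}^{t} [ \lambda_L X_s(m) + \lambda_G \frac{\nu}{\bar\pi}m ](1-\frac{X_s(m)}{\nu}) ds \big) - P_{rec}\big( \int_{0}^{t} \gamma X_s(m) ds \big)$ with $\nu\sim\pi$ and independent standard Poisson processes; $\mu_\infty(m)$ is the unique stationary distribution of $(\nu,X_t(m))$ with first marginal $\pi$, and $\bar\mu_\infty(m)=\sum_{(n,k)}k\,\mu_\infty(m)(\{(n,k)\})$ is its mean number of infected. *)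

theory Defs
  imports "HOL-Analysis.Analysis" "HOL-Probability.Probability"
begin

definition pibar :: "nat pmf \<Rightarrow> real" where
  "pibar p = measure_pmf.expectation p real"

text \<open>Infection (birth) rate of the forced process at state k, given nu = n and forcing m.\<close>
definition inf_rate :: "real \<Rightarrow> real \<Rightarrow> nat pmf \<Rightarrow> nat \<Rightarrow> real \<Rightarrow> nat \<Rightarrow> real" where
  "inf_rate lL lG p n m k =
     (lL * real k + lG * (real n / pibar p) * m) * (1 - real k / real n)"

definition rec_rate :: "real \<Rightarrow> nat \<Rightarrow> real" where
  "rec_rate g k = g * real k"

text \<open>Generator (Q-matrix) of the forced process X(m) given nu = n, on the states {0..n}.\<close>
definition gen :: "real \<Rightarrow> real \<Rightarrow> real \<Rightarrow> nat pmf \<Rightarrow> nat \<Rightarrow> real \<Rightarrow> nat \<Rightarrow> nat \<Rightarrow> real" where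
  "gen lL lG g p n m i j =
     (if j = i + 1 then inf_rate lL lG p n m i else 0)
   + (if j + 1 = i then rec_rate g i else 0)
   - (if j = i then inf_rate lL lG p n m i + rec_rate g i else 0)"

definition is_stationary ::
  "real \<Rightarrow> real \<Rightarrow> real \<Rightarrow> nat pmf \<Rightarrow> nat \<Rightarrow> real \<Rightarrow> (nat \<Rightarrow> real) \<Rightarrow> bool" where
  "is_stationary lL lG g p n m q \<longleftrightarrow>
     (\<forall>k. q k \<ge> 0) \<and> (\<forall>k>n. q k = 0) \<and> (\<Sum>k\<le>n. q k) = 1 \<and>
     (\<forall>j\<le>n. (\<Sum>i\<le>n. q i * gen lL lG g p n m i j) = 0)"

text \<open>The (unique) stationary distribution of X(m) conditioned on nu = n.\<close>
definition cond_stat :: "real \<Rightarrow> real \<Rightarrow> real \<Rightarrow> nat pmf \<Rightarrow> nat \<Rightarrow> real \<Rightarrow> nat \<Rightarrow> real" where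
  "cond_stat lL lG g p n m = (THE q. is_stationary lL lG g p n m q)"

text \<open>mu_infty(m)({(n,k)}): the stationary distribution of (nu, X(m)) with first marginal pi.\<close>
definition mu_inf :: "real \<Rightarrow> real \<Rightarrow> real \<Rightarrow> nat pmf \<Rightarrow> real \<Rightarrow> nat \<times> nat \<Rightarrow> real" where
  "mu_inf lL lG g p m nk = pmf p (fst nk) * cond_stat lL lG g p (fst nk) m (snd nk)"

definition mubar_inf :: "real \<Rightarrow> real \<Rightarrow> real \<Rightarrow> nat pmf \<Rightarrow> real \<Rightarrow> real" where
  "mubar_inf lL lG g p m = (\<Sum>\<^sub>\<infinity>nk\<in>UNIV. real (snd nk) * mu_inf lL lG g p m nk)"

definition strict_concave_on :: "real set \<Rightarrow> (real \<Rightarrow> real) \<Rightarrow> bool" where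
  "strict_concave_on S f \<longleftrightarrow> convex S \<and>
     (\<forall>x\<in>S. \<forall>y\<in>S. x \<noteq> y \<longrightarrow> (\<forall>t. 0 < t \<and> t < 1 \<longrightarrow>
        f ((1 - t) * x + t * y) > (1 - t) * f x + t * f y))"

end

theory Submission
  imports Defs
begin

definition rp :: "real \<Rightarrow> real \<Rightarrow> nat \<Rightarrow> real" where
  "rp a x k = (\<Prod>j<k. x + a * real j)"

lemma rp_0[simp]: "rp a x 0 = 1" by (simp add: rp_def)
lemma rp_Suc: "rp a x (Suc k) = rp a x k * (x + a * real k)" by (simp add: rp_def)
lemma rp_Suc': "rp a x (Suc k) = x * rp a (x + a) k"
proof (induction k)
  case 0 then show ?case by (simp add: rp_def)
next
  case (Suc k)
  have "rp a x (Suc (Suc k)) = rp a x (Suc k) * (x + a * real (Suc k))" by (rule rp_Suc)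
  also have "\<dots> = x * (rp a (x + a) k * (x + a + a * real k))" using Suc by (simp add: algebra_simps)
  also have "\<dots> = x * rp a (x + a) (Suc k)" by (simp add: rp_Suc algebra_simps)
  finally show ?case .
qed
lemma rp_nonneg: "a \<ge> 0 \<Longrightarrow> x \<ge> 0 \<Longrightarrow> rp a x k \<ge> 0"
  unfolding rp_def by (intro prod_nonneg) auto
lemma rp_diff: "rp a (x + a) (Suc k) - rp a x (Suc k) = a * real (Suc k) * rp a (x + a) k"
proof -
  have "rp a (x + a) (Suc k) = rp a (x + a) k * (x + a + a * real k)" by (simp add: rp_Suc)
  moreover have "rp a x (Suc k) = x * rp a (x + a) k" by (rule rp_Suc')
  ultimately show ?thesis by (simp add: algebra_simps)
qed

definition PP :: "real \<Rightarrow> nat \<Rightarrow> real \<Rightarrow> real" where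
  "PP a N x = (\<Sum>k\<le>N. real (N choose k) * rp a x k)"

lemma PP_0[simp]: "PP a 0 x = 1" by (simp add: PP_def)

lemma PP_ge1: "a \<ge> 0 \<Longrightarrow> x \<ge> 0 \<Longrightarrow> PP a N x \<ge> 1"
proof -
  assume h: "a \<ge> 0" "x \<ge> 0"
  have "PP a N x = real (N choose 0) * rp a x 0 + (\<Sum>k<N. real (N choose Suc k) * rp a x (Suc k))"
    unfolding PP_def by (subst sum.atMost_shift) auto
  moreover have "(\<Sum>k<N. real (N choose Suc k) * rp a x (Suc k)) \<ge> 0"
    using h by (intro sum_nonneg mult_nonneg_nonneg rp_nonneg) auto
  ultimately show ?thesis by simp
qed

lemma PP_A: "PP a (Suc N) x = PP a N x + x * PP a N (x + a)"
proof -
  have "PP a (Suc N) x = 1 + (\<Sum>k\<le>N. real (Suc N choose Suc k) * rp a x (Suc k))"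
    unfolding PP_def by (subst sum.atMost_Suc_shift) simp
  also have "\<dots> = 1 + (\<Sum>k\<le>N. real (N choose Suc k) * rp a x (Suc k))
       + x * (\<Sum>k\<le>N. real (N choose k) * rp a (x + a) k)"
    by (simp add: sum.distrib sum_distrib_left rp_Suc' algebra_simps)
  also have "1 + (\<Sum>k\<le>N. real (N choose Suc k) * rp a x (Suc k)) = PP a N x"
  proof -
    have "PP a N x = (\<Sum>k\<le>Suc N. real (N choose k) * rp a x k)"
      unfolding PP_def by simp
    also have "\<dots> = 1 + (\<Sum>k\<le>N. real (N choose Suc k) * rp a x (Suc k))"
      by (subst sum.atMost_Suc_shift) simp
    finally show ?thesis by simp
  qed
  finally show ?thesis by (simp add: PP_def)
qed

lemma PP_C: "(\<Sum>k\<le>Suc N. real k * (real (Suc N choose k) * rp a x k)) = real (Suc N) * x * PP a N (x + a)"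
proof -
  have "(\<Sum>k\<le>Suc N. real k * (real (Suc N choose k) * rp a x k))
     = (\<Sum>k\<le>N. real (Suc k) * real (Suc N choose Suc k) * rp a x (Suc k))"
    by (subst sum.atMost_Suc_shift) (simp add: mult.assoc)
  also have "\<dots> = (\<Sum>k\<le>N. real (Suc N) * real (N choose k) * (x * rp a (x + a) k))"
  proof (rule sum.cong[OF refl])
    fix k
    have "real (Suc k) * real (Suc N choose Suc k) = real (Suc N) * real (N choose k)"
      using Suc_times_binomial[of k N] by (metis of_nat_mult)
    then show "real (Suc k) * real (Suc N choose Suc k) * rp a x (Suc k) = real (Suc N) * real (N choose k) * (x * rp a (x + a) k)"
      by (simp add: rp_Suc')
  qed
  also have "\<dots> = real (Suc N) * x * PP a N (x + a)"
    by (simp add: PP_def sum_distrib_left algebra_simps)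
  finally show ?thesis .
qed

lemma PP_B: "PP a (Suc N) (x + a) - PP a (Suc N) x = a * real (Suc N) * PP a N (x + a)"
proof -
  have "PP a (Suc N) (x + a) - PP a (Suc N) x = (\<Sum>k\<le>Suc N. real (Suc N choose k) * (rp a (x + a) k - rp a x k))"
    by (simp add: PP_def sum_subtractf algebra_simps)
  also have "\<dots> = (\<Sum>k\<le>N. real (Suc N choose Suc k) * (rp a (x + a) (Suc k) - rp a x (Suc k)))"
    by (subst sum.atMost_Suc_shift) (simp del: binomial_Suc_Suc)
  also have "\<dots> = (\<Sum>k\<le>N. a * (real (Suc k) * real (Suc N choose Suc k)) * rp a (x + a) k)"
    by (intro sum.cong refl) (simp only: rp_diff, simp add: algebra_simps del: binomial_Suc_Suc)
  also have "\<dots> = (\<Sum>k\<le>N. a * (real (Suc N) * real (N choose k)) * rp a (x + a) k)"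
  proof (rule sum.cong[OF refl])
    fix k
    have "real (Suc k) * real (Suc N choose Suc k) = real (Suc N) * real (N choose k)"
      using Suc_times_binomial[of k N] by (metis of_nat_mult)
    then show "a * (real (Suc k) * real (Suc N choose Suc k)) * rp a (x + a) k = a * (real (Suc N) * real (N choose k)) * rp a (x + a) k"
      by simp
  qed
  also have "\<dots> = a * real (Suc N) * PP a N (x + a)"
    by (simp add: PP_def sum_distrib_left algebra_simps)
  finally show ?thesis .
qed

lemma PP_T: "PP a (Suc (Suc N)) x = (x + 1 + a * real (Suc N)) * PP a (Suc N) x - a * real (Suc N) * PP a N x"
proof -
  have 1: "PP a (Suc (Suc N)) x = PP a (Suc N) x + x * PP a (Suc N) (x + a)" by (rule PP_A)
  have 2: "PP a (Suc N) (x + a) = PP a (Suc N) x + a * real (Suc N) * PP a N (x + a)" using PP_B[of a N x] by simp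
  have 3: "x * PP a N (x + a) = PP a (Suc N) x - PP a N x" using PP_A[of a N x] by simp
  have "PP a (Suc (Suc N)) x = PP a (Suc N) x + x * PP a (Suc N) x + a * real (Suc N) * (x * PP a N (x + a))"
    using 1 2 by (simp add: algebra_simps)
  from this[unfolded 3] show ?thesis by (simp add: algebra_simps)
qed


lemma harm_strict:
  fixes A B t :: real
  assumes "A > 0" "B > 0" "A \<noteq> B" "0 < t" "t < 1"
  shows "1 / ((1 - t) * A + t * B) < (1 - t) / A + t / B"
proof -
  have D: "(1 - t) * A + t * B > 0" using assms by (intro add_pos_pos mult_pos_pos) auto
  have "(1 - t) / A + t / B - 1 / ((1 - t) * A + t * B) = t * (1 - t) * (A - B)^2 / (A * B * ((1 - t) * A + t * B))"
    using assms D by (simp add: field_simps power2_eq_square)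
  moreover have "t * (1 - t) * (A - B)^2 / (A * B * ((1 - t) * A + t * B)) > 0"
    using assms D by (intro divide_pos_pos mult_pos_pos) auto
  ultimately show ?thesis by linarith
qed

lemma recip_step:
  fixes R :: "real \<Rightarrow> real" and \<beta> c :: real
  assumes conv: "\<And>x y t. 0\<le>x \<Longrightarrow> 0\<le>y \<Longrightarrow> 0\<le>t \<Longrightarrow> t\<le>1 \<Longrightarrow> R((1-t)*x+t*y) \<le> (1-t)*R x + t*R y"
    and mono: "\<And>x y. 0\<le>x \<Longrightarrow> x\<le>y \<Longrightarrow> R y \<le> R x"
    and b: "\<beta> \<ge> 0" and pos: "\<And>x. 0\<le>x \<Longrightarrow> x + c - \<beta>*R x > 0"
  shows "\<And>x y t. 0\<le>x \<Longrightarrow> 0\<le>y \<Longrightarrow> x\<noteq>y \<Longrightarrow> 0<t \<Longrightarrow> t<1 \<Longrightarrow>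
      1/(((1-t)*x+t*y) + c - \<beta>*R((1-t)*x+t*y)) < (1-t)/(x + c - \<beta>*R x) + t/(y + c - \<beta>*R y)"
   and "\<And>x y. 0\<le>x \<Longrightarrow> x<y \<Longrightarrow> 1/(y + c - \<beta>*R y) < 1/(x + c - \<beta>*R x)"
proof -
  define u where "u = (\<lambda>x. x + c - \<beta>*R x)"
  have upos: "\<And>x. 0\<le>x \<Longrightarrow> u x > 0" using pos by (simp add: u_def)
  have umono: "u x < u y" if "0\<le>x" "x<y" for x y
  proof -
    have "R y \<le> R x" using mono that by auto
    then have "\<beta> * R y \<le> \<beta> * R x" using b by (intro mult_left_mono) auto
    then show ?thesis using that by (simp add: u_def)
  qed
  show "1/(y + c - \<beta>*R y) < 1/(x + c - \<beta>*R x)" if "0\<le>x" "x<y" for x y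
    using umono[OF that] upos[of x] upos[of y] that unfolding u_def
    by (intro divide_strict_left_mono) auto
  show "1/(((1-t)*x+t*y) + c - \<beta>*R((1-t)*x+t*y)) < (1-t)/(x + c - \<beta>*R x) + t/(y + c - \<beta>*R y)"
    if h: "0\<le>x" "0\<le>y" "x\<noteq>y" "0<t" "t<1" for x y t
  proof -
    let ?z = "(1-t)*x+t*y"
    have z0: "0 \<le> ?z" using h by (intro add_nonneg_nonneg mult_nonneg_nonneg) auto
    have "R ?z \<le> (1-t)*R x + t*R y" using conv[of x y t] h by auto
    then have "\<beta> * R ?z \<le> \<beta> * ((1-t)*R x + t*R y)" using b by (intro mult_left_mono) auto
    then have uc: "(1-t) * u x + t * u y \<le> u ?z" unfolding u_def by (simp add: algebra_simps)
    have uxy: "u x \<noteq> u y" using umono h by (metis linorder_neqE_linordered_idom order_less_irrefl)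
    have pos2: "(1-t) * u x + t * u y > 0" using upos h by (intro add_pos_pos mult_pos_pos) auto
    have "1 / u ?z \<le> 1 / ((1-t) * u x + t * u y)"
      using uc pos2 by (intro divide_left_mono) auto
    also have "\<dots> < (1-t) / u x + t / u y"
      using harm_strict[of "u x" "u y" t] upos h uxy by auto
    finally show ?thesis unfolding u_def .
  qed
qed

definition RR :: "real \<Rightarrow> nat \<Rightarrow> real \<Rightarrow> real" where
  "RR a N x = PP a N x / PP a (Suc N) x"

lemma PP_1: "PP a (Suc 0) x = 1 + x" by (simp add: PP_def rp_def)

lemma RR_0: "RR a 0 x = 1 / (x + 1 - 0 * (\<lambda>_. 0::real) x)"
  by (simp add: RR_def PP_1 add.commute)

lemma RR_Suc: "a \<ge> 0 \<Longrightarrow> x \<ge> 0 \<Longrightarrow>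
  RR a (Suc N) x = 1 / (x + (1 + a * real (Suc N)) - (a * real (Suc N)) * RR a N x)"
proof -
  assume h: "a \<ge> 0" "x \<ge> 0"
  have p: "PP a (Suc N) x > 0" using PP_ge1[OF h] by (smt (verit))
  have "PP a (Suc (Suc N)) x = PP a (Suc N) x * (x + (1 + a * real (Suc N)) - (a * real (Suc N)) * RR a N x)"
    unfolding PP_T RR_def using p by (simp add: field_simps)
  then show ?thesis unfolding RR_def using p by simp
qed

lemma RR_pos: "a \<ge> 0 \<Longrightarrow> x \<ge> 0 \<Longrightarrow> RR a N x > 0"
  unfolding RR_def using PP_ge1 by (smt (verit) divide_pos_pos)

lemma RR_props:
  assumes a: "a \<ge> 0"
  shows "(\<forall>x y t. 0\<le>x \<longrightarrow> 0\<le>y \<longrightarrow> x\<noteq>y \<longrightarrow> 0<t \<longrightarrow> t<1 \<longrightarrow>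
            RR a N ((1-t)*x+t*y) < (1-t) * RR a N x + t * RR a N y)
       \<and> (\<forall>x y. 0\<le>x \<longrightarrow> x<y \<longrightarrow> RR a N y < RR a N x)"
proof (induction N)
  case 0
  have L1: "\<And>x y t. 0\<le>x \<Longrightarrow> 0\<le>y \<Longrightarrow> x\<noteq>y \<Longrightarrow> 0<t \<Longrightarrow> t<1 \<Longrightarrow>
      1/(((1-t)*x+t*y) + 1 - 0*(\<lambda>_. 0::real)((1-t)*x+t*y)) < (1-t)/(x + 1 - 0*(\<lambda>_. 0::real) x) + t/(y + 1 - 0*(\<lambda>_. 0::real) y)"
   and L2: "\<And>x y. 0\<le>x \<Longrightarrow> x<y \<Longrightarrow> 1/(y + 1 - 0*(\<lambda>_. 0::real) y) < 1/(x + 1 - 0*(\<lambda>_. 0::real) x)"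
    by (rule recip_step[of "\<lambda>_. 0" 0 1]; simp)+
  show ?case unfolding RR_0 using L1 L2 by simp
next
  case (Suc N)
  let ?R = "RR a N" and ?b = "a * real (Suc N)" and ?c = "1 + a * real (Suc N)"
  have conv: "?R((1-t)*x+t*y) \<le> (1-t)*?R x + t*?R y" if "0\<le>x" "0\<le>y" "0\<le>t" "t\<le>1" for x y t
  proof (cases "x = y \<or> t = 0 \<or> t = 1")
    case True then show ?thesis by (auto simp: algebra_simps)
  next
    case False
    then have "x \<noteq> y" "0 < t" "t < 1" using that by auto
    then show ?thesis using Suc.IH that by (meson less_imp_le)
  qed
  have mono: "?R y \<le> ?R x" if "0\<le>x" "x\<le>y" for x y
    using Suc.IH that by (cases "x = y") (auto intro: less_imp_le)
  have b: "?b \<ge> 0" using a by simp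
  have pos: "x + ?c - ?b * ?R x > 0" if "0 \<le> x" for x
  proof -
    have "RR a (Suc N) x > 0" using RR_pos a that by blast
    then show ?thesis using RR_Suc[OF a that] by (simp add: zero_less_divide_iff)
  qed
  have L1: "\<And>x y t. 0\<le>x \<Longrightarrow> 0\<le>y \<Longrightarrow> x\<noteq>y \<Longrightarrow> 0<t \<Longrightarrow> t<1 \<Longrightarrow>
      1/(((1-t)*x+t*y) + ?c - ?b*?R((1-t)*x+t*y)) < (1-t)/(x + ?c - ?b*?R x) + t/(y + ?c - ?b*?R y)"
   and L2: "\<And>x y. 0\<le>x \<Longrightarrow> x<y \<Longrightarrow> 1/(y + ?c - ?b*?R y) < 1/(x + ?c - ?b*?R x)"
    by (rule recip_step[of ?R ?b ?c], (rule conv; assumption), (rule mono; assumption), rule b, (rule pos; assumption), assumption+)+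
  show ?case
  proof (intro conjI allI impI)
    fix x y t :: real assume h: "0\<le>x" "0\<le>y" "x\<noteq>y" "0<t" "t<1"
    have z: "0 \<le> (1-t)*x+t*y" using h by (intro add_nonneg_nonneg mult_nonneg_nonneg) auto
    show "RR a (Suc N) ((1-t)*x+t*y) < (1-t) * RR a (Suc N) x + t * RR a (Suc N) y"
      using L1[OF h] unfolding RR_Suc[OF a h(1)] RR_Suc[OF a h(2)] RR_Suc[OF a z] by simp
  next
    fix x y :: real assume h: "0\<le>x" "x<y"
    show "RR a (Suc N) y < RR a (Suc N) x"
    proof -
      have y0: "0 \<le> y" using h by simp
      show ?thesis using L2[OF h] unfolding RR_Suc[OF a h(1)] RR_Suc[OF a y0] by simp
    qed
  qed
qed


lemma gen_sum:
  fixes q b d :: "nat \<Rightarrow> real"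
  assumes "j \<le> n" "q (Suc n) = 0" "d 0 = 0"
  shows "(\<Sum>i\<le>n. q i * ((if j = i+1 then b i else 0) + (if j+1 = i then d i else 0) - (if j = i then b i + d i else 0)))
     = (if j = 0 then 0 else q (j-1) * b (j-1) - q j * d j) - (q j * b j - q (Suc j) * d (Suc j))"
proof -
  have e: "(\<Sum>i\<le>n. q i * ((if j = i+1 then b i else 0) + (if j+1 = i then d i else 0) - (if j = i then b i + d i else 0)))
    = (\<Sum>i\<le>n. (if j = i+1 then q i * b i else 0)) + (\<Sum>i\<le>n. (if i = j+1 then q i * d i else 0)) - (\<Sum>i\<le>n. (if i = j then q i * (b i + d i) else 0))"
  proof -
    have "(\<Sum>i\<le>n. q i * ((if j = i+1 then b i else 0) + (if j+1 = i then d i else 0) - (if j = i then b i + d i else 0)))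
      = (\<Sum>i\<le>n. ((if j = i+1 then q i * b i else 0) + (if i = j+1 then q i * d i else 0)) - (if i = j then q i * (b i + d i) else 0))"
      by (intro sum.cong refl) (auto simp: algebra_simps)
    then show ?thesis by (simp only: sum_subtractf sum.distrib)
  qed
  have s2: "(\<Sum>i\<le>n. (if i = j+1 then q i * d i else 0)) = q (Suc j) * d (Suc j)"
    using assms by (cases "j = n") (auto simp: sum.delta)
  have s3: "(\<Sum>i\<le>n. (if i = j then q i * (b i + d i) else 0)) = q j * (b j + d j)"
    using assms by (simp add: sum.delta)
  have s1: "(\<Sum>i\<le>n. (if j = i+1 then q i * b i else 0)) = (if j = 0 then 0 else q (j-1) * b (j-1))"
  proof (cases j)
    case 0 then show ?thesis by simp
  next
    case (Suc j') then show ?thesis using assms by (simp add: sum.delta')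
  qed
  show ?thesis unfolding e s1 s2 s3 using assms by (cases j) (auto simp: algebra_simps)
qed

lemma flow_iff:
  fixes q b d :: "nat \<Rightarrow> real"
  assumes "q (Suc n) = 0" "d 0 = 0" "b n = 0"
  shows "(\<forall>j\<le>n. (\<Sum>i\<le>n. q i * ((if j = i+1 then b i else 0) + (if j+1 = i then d i else 0) - (if j = i then b i + d i else 0))) = 0)
     \<longleftrightarrow> (\<forall>k<n. q (Suc k) * d (Suc k) = q k * b k)"
proof -
  define Sm where "Sm j = (\<Sum>i\<le>n. q i * ((if j = i+1 then b i else 0) + (if j+1 = i then d i else 0) - (if j = i then b i + d i else 0)))" for j
  define F where "F k = q k * b k - q (Suc k) * d (Suc k)" for k
  have S: "Sm j = (if j = 0 then 0 else F (j-1)) - F j" if "j \<le> n" for j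
    using gen_sum[of j n q d b, OF that assms(1,2)] that unfolding Sm_def by (cases j) (auto simp: F_def)
  have Fn: "F n = 0" using assms by (simp add: F_def)
  have "(\<forall>j\<le>n. Sm j = 0) \<longleftrightarrow> (\<forall>k<n. q (Suc k) * d (Suc k) = q k * b k)"
  proof
    assume h: "\<forall>j\<le>n. Sm j = 0"
    have "F k = 0" if "k < n" for k
      using that
    proof (induction k)
      case 0 then show ?case using h S[of 0] by auto
    next
      case (Suc k)
      have A: "Sm (Suc k) = 0" using h Suc.prems by auto
      have B: "Sm (Suc k) = F k - F (Suc k)" using S[of "Suc k"] Suc.prems by auto
      show ?case using A B Suc by auto
    qed
    then show "\<forall>k<n. q (Suc k) * d (Suc k) = q k * b k" by (auto simp: F_def)
  next
    assume h: "\<forall>k<n. q (Suc k) * d (Suc k) = q k * b k"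
    have F0: "F k = 0" if "k \<le> n" for k
      using h Fn that by (cases "k = n") (auto simp: F_def)
    show "\<forall>j\<le>n. Sm j = 0"
      using S F0 by auto
  qed
  then show ?thesis unfolding Sm_def .
qed


definition aN :: "real \<Rightarrow> real \<Rightarrow> nat \<Rightarrow> real" where "aN lL g n = lL / (real n * g)"
definition xM :: "real \<Rightarrow> real \<Rightarrow> nat pmf \<Rightarrow> real \<Rightarrow> real" where "xM lG g p m = lG * m / (pibar p * g)"
definition qs :: "real \<Rightarrow> real \<Rightarrow> real \<Rightarrow> nat pmf \<Rightarrow> nat \<Rightarrow> real \<Rightarrow> nat \<Rightarrow> real" where
  "qs lL lG g p n m k = (if k \<le> n then real (n choose k) * rp (aN lL g n) (xM lG g p m) k / PP (aN lL g n) n (xM lG g p m) else 0)"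

lemma pibar_nonneg: "pibar p \<ge> 0"
  unfolding pibar_def by (rule integral_nonneg_AE) auto

lemma binom_real: "k < n \<Longrightarrow> real (Suc k) * real (n choose Suc k) = real (n - k) * real (n choose k)"
proof -
  assume "k < n"
  have "Suc k * (n choose Suc k) = (n - k) * (n choose k)"
    using binomial_absorption[of k n] binomial_absorb_comp[of n k] by simp
  then show ?thesis by (metis of_nat_mult)
qed

lemma lemK:
  assumes "k < n" "g > 0"
  shows "real (n choose k) * inf_rate lL lG p n m k
     = rec_rate g (Suc k) * real (n choose Suc k) * (xM lG g p m + aN lL g n * real k)"
proof -
  have n0: "real n > 0" using assms by simp
  have c: "real (Suc k) * real (n choose Suc k) = (real n - real k) * real (n choose k)"
    using binom_real[OF assms(1)] assms(1) by (simp add: of_nat_diff)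
  have "rec_rate g (Suc k) * real (n choose Suc k) * (xM lG g p m + aN lL g n * real k)
      = g * (real (Suc k) * real (n choose Suc k)) * (xM lG g p m + aN lL g n * real k)"
    by (simp add: rec_rate_def)
  also have "\<dots> = real (n choose k) * (g * (real n - real k) * (xM lG g p m + aN lL g n * real k))"
    unfolding c by simp
  also have "g * (real n - real k) * (xM lG g p m + aN lL g n * real k) = inf_rate lL lG p n m k"
  proof -
    define c where "c = g * xM lG g p m"
    have e1: "lG * (real n / pibar p) * m = real n * c"
      unfolding c_def xM_def using assms(2) by (cases "pibar p = 0") (simp_all add: field_simps)
    have e2: "g * aN lL g n = lL / real n" unfolding aN_def using assms(2) by (simp add: field_simps)
    have "g * (real n - real k) * (xM lG g p m + aN lL g n * real k) = (real n - real k) * (c + lL / real n * real k)"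
      unfolding c_def e2[symmetric] by (simp add: algebra_simps)
    also have "\<dots> = (lL * real k + real n * c) * (1 - real k / real n)"
      using n0 by (simp add: field_simps)
    finally show ?thesis unfolding inf_rate_def e1 .
  qed
  finally show ?thesis by simp
qed

lemma stat_iff:
  "is_stationary lL lG g p n m q \<longleftrightarrow> (\<forall>k. q k \<ge> 0) \<and> (\<forall>k>n. q k = 0) \<and> (\<Sum>k\<le>n. q k) = 1 \<and>
     (\<forall>k<n. q (Suc k) * rec_rate g (Suc k) = q k * inf_rate lL lG p n m k)"
proof -
  have bn: "inf_rate lL lG p n m n = 0" by (cases "n = 0") (auto simp: inf_rate_def)
  have d0: "rec_rate g 0 = 0" by (simp add: rec_rate_def)
  show ?thesis
  proof (cases "\<forall>k>n. q k = 0")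
    case True
    then have qn: "q (Suc n) = 0" by simp
    show ?thesis
      unfolding is_stationary_def gen_def
      using flow_iff[of q n "rec_rate g" "inf_rate lL lG p n m", OF qn d0 bn] True by auto
  next
    case False then show ?thesis unfolding is_stationary_def by auto
  qed
qed

lemma x_nonneg: "lG \<ge> 0 \<Longrightarrow> g > 0 \<Longrightarrow> m \<ge> 0 \<Longrightarrow> xM lG g p m \<ge> 0"
  unfolding xM_def using pibar_nonneg[of p] by simp

lemma a_nonneg: "lL \<ge> 0 \<Longrightarrow> g > 0 \<Longrightarrow> aN lL g n \<ge> 0"
  unfolding aN_def by simp

lemma qs_stat:
  assumes "lL \<ge> 0" "lG \<ge> 0" "g > 0" "m \<ge> 0"
  shows "is_stationary lL lG g p n m (qs lL lG g p n m)"
proof -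
  let ?a = "aN lL g n" and ?x = "xM lG g p m"
  have a: "?a \<ge> 0" and x: "?x \<ge> 0" using assms a_nonneg x_nonneg by auto
  have P: "PP ?a n ?x \<ge> 1" using PP_ge1[OF a x] .
  have nn: "qs lL lG g p n m k \<ge> 0" for k
    unfolding qs_def using P rp_nonneg[OF a x] by auto
  have sm: "(\<Sum>k\<le>n. qs lL lG g p n m k) = 1"
    unfolding qs_def using P by (simp add: sum_divide_distrib[symmetric] PP_def)
  have fl: "qs lL lG g p n m (Suc k) * rec_rate g (Suc k) = qs lL lG g p n m k * inf_rate lL lG p n m k"
    if "k < n" for k
  proof -
    have "qs lL lG g p n m (Suc k) * rec_rate g (Suc k)
        = rp ?a ?x k * (rec_rate g (Suc k) * real (n choose Suc k) * (?x + ?a * real k)) / PP ?a n ?x"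
      using that unfolding qs_def by (simp add: rp_Suc algebra_simps)
    also have "\<dots> = rp ?a ?x k * (real (n choose k) * inf_rate lL lG p n m k) / PP ?a n ?x"
      using lemK[OF that assms(3)] by simp
    also have "\<dots> = qs lL lG g p n m k * inf_rate lL lG p n m k"
      using that unfolding qs_def by simp
    finally show ?thesis .
  qed
  show ?thesis unfolding stat_iff using nn sm fl by (auto simp: qs_def)
qed

lemma stat_unique:
  assumes "lL \<ge> 0" "lG \<ge> 0" "g > 0" "m \<ge> 0"
    and st: "is_stationary lL lG g p n m q"
  shows "q = qs lL lG g p n m"
proof -
  let ?a = "aN lL g n" and ?x = "xM lG g p m"
  have a: "?a \<ge> 0" and x: "?x \<ge> 0" using assms a_nonneg x_nonneg by auto
  have P: "PP ?a n ?x \<ge> 1" using PP_ge1[OF a x] .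
  have S: "\<forall>k>n. q k = 0" "(\<Sum>k\<le>n. q k) = 1"
    and fl: "\<And>k. k<n \<Longrightarrow> q (Suc k) * rec_rate g (Suc k) = q k * inf_rate lL lG p n m k"
    using st unfolding stat_iff by auto
  have form: "q k = q 0 * (real (n choose k) * rp ?a ?x k)" if "k \<le> n" for k
    using that
  proof (induction k)
    case 0 then show ?case by simp
  next
    case (Suc k)
    then have k: "k < n" by simp
    have IH: "q k = q 0 * (real (n choose k) * rp ?a ?x k)" using Suc.IH k by simp
    have d: "rec_rate g (Suc k) > 0" using assms(3) by (simp add: rec_rate_def)
    have "q (Suc k) * rec_rate g (Suc k) = q k * inf_rate lL lG p n m k" by (rule fl[OF k])
    also have "\<dots> = q 0 * rp ?a ?x k * (real (n choose k) * inf_rate lL lG p n m k)"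
      unfolding IH by (simp only: mult_ac)
    also have "\<dots> = q 0 * rp ?a ?x k * (rec_rate g (Suc k) * real (n choose Suc k) * (?x + ?a * real k))"
      unfolding lemK[OF k assms(3)] ..
    also have "\<dots> = (q 0 * (real (n choose Suc k) * rp ?a ?x (Suc k))) * rec_rate g (Suc k)"
      unfolding rp_Suc by (simp only: mult_ac)
    finally show ?case using d by (metis mult_right_cancel less_irrefl)
  qed
  have "1 = (\<Sum>k\<le>n. q 0 * (real (n choose k) * rp ?a ?x k))"
  proof -
    have "(\<Sum>k\<le>n. q k) = (\<Sum>k\<le>n. q 0 * (real (n choose k) * rp ?a ?x k))"
      by (rule sum.cong[OF refl], rule form, simp)
    then show ?thesis using S(2) by simp
  qed
  also have "\<dots> = q 0 * PP ?a n ?x" by (simp add: PP_def sum_distrib_left)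
  finally have q0: "q 0 = 1 / PP ?a n ?x" using P by (simp add: field_simps)
  show ?thesis
  proof
    fix k show "q k = qs lL lG g p n m k"
    proof (cases "k \<le> n")
      case True
      have "q k = q 0 * (real (n choose k) * rp ?a ?x k)" by (rule form[OF True])
      also have "\<dots> = qs lL lG g p n m k" unfolding q0 qs_def using True by simp
      finally show ?thesis .
    next
      case False then show ?thesis using S(1) unfolding qs_def by simp
    qed
  qed
qed

lemma cond_stat_eq:
  assumes "lL \<ge> 0" "lG \<ge> 0" "g > 0" "m \<ge> 0"
  shows "cond_stat lL lG g p n m = qs lL lG g p n m"
  unfolding cond_stat_def
  using qs_stat[OF assms] stat_unique[OF assms] by (rule the_equality)

definition En :: "real \<Rightarrow> real \<Rightarrow> real \<Rightarrow> nat pmf \<Rightarrow> nat \<Rightarrow> real \<Rightarrow> real" where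
  "En lL lG g p n m = (\<Sum>k\<le>n. real k * cond_stat lL lG g p n m k)"

lemma En_formula:
  assumes "lL \<ge> 0" "lG \<ge> 0" "g > 0" "m \<ge> 0"
  shows "En lL lG g p (Suc N) m = real (Suc N) * (1 - RR (aN lL g (Suc N)) N (xM lG g p m))"
proof -
  let ?a = "aN lL g (Suc N)" and ?x = "xM lG g p m"
  have a: "?a \<ge> 0" and x: "?x \<ge> 0" using assms a_nonneg x_nonneg by auto
  have P: "PP ?a (Suc N) ?x \<ge> 1" using PP_ge1[OF a x] .
  have "En lL lG g p (Suc N) m = (\<Sum>k\<le>Suc N. real k * (real (Suc N choose k) * rp ?a ?x k) / PP ?a (Suc N) ?x)"
    unfolding En_def cond_stat_eq[OF assms] qs_def
    by (intro sum.cong refl) (simp del: binomial_Suc_Suc)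
  also have "\<dots> = (\<Sum>k\<le>Suc N. real k * (real (Suc N choose k) * rp ?a ?x k)) / PP ?a (Suc N) ?x"
    by (rule sum_divide_distrib[symmetric])
  also have "\<dots> = real (Suc N) * ?x * PP ?a N (?x + ?a) / PP ?a (Suc N) ?x"
    by (simp only: PP_C)
  also have "\<dots> = real (Suc N) * (PP ?a (Suc N) ?x - PP ?a N ?x) / PP ?a (Suc N) ?x"
    by (simp add: PP_A[of ?a N ?x])
  also have "\<dots> = real (Suc N) * (1 - RR ?a N ?x)"
    unfolding RR_def using P by (simp add: field_simps)
  finally show ?thesis .
qed

lemma En_0:
  assumes "lL \<ge> 0" "lG \<ge> 0" "g > 0" "m \<ge> 0"
  shows "En lL lG g p 0 m = 0"
  unfolding En_def by simp

lemma En_bounds: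
  assumes "lL \<ge> 0" "lG \<ge> 0" "g > 0" "m \<ge> 0"
  shows "0 \<le> En lL lG g p n m \<and> En lL lG g p n m \<le> real n"
proof -
  let ?q = "cond_stat lL lG g p n m"
  have st: "is_stationary lL lG g p n m ?q"
    unfolding cond_stat_eq[OF assms] by (rule qs_stat[OF assms])
  then have nn: "\<And>k. ?q k \<ge> 0" and s1: "(\<Sum>k\<le>n. ?q k) = 1" unfolding stat_iff by auto
  have "En lL lG g p n m \<le> (\<Sum>k\<le>n. real n * ?q k)"
    unfolding En_def using nn by (intro sum_mono mult_right_mono) auto
  also have "\<dots> = real n" using s1 by (simp add: sum_distrib_left[symmetric])
  finally show ?thesis unfolding En_def using nn by (auto intro!: sum_nonneg)
qed


context
  fixes lL lG g :: real and p :: "nat pmf"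
  assumes lL: "lL > 0" and lG: "lG > 0" and g: "g > 0"
begin

lemma xM_eq: "xM lG g p m = (lG / (pibar p * g)) * m"
  unfolding xM_def by simp

lemma xM_lin: "xM lG g p ((1-t)*x+t*y) = (1-t) * xM lG g p x + t * xM lG g p y"
  unfolding xM_eq by (simp only: algebra_simps)

lemma xM_mono: "x \<le> y \<Longrightarrow> xM lG g p x \<le> xM lG g p y"
  unfolding xM_def using lG g pibar_nonneg[of p]
  by (intro divide_right_mono mult_left_mono) auto

lemma xM_inj: "pibar p > 0 \<Longrightarrow> x \<noteq> y \<Longrightarrow> xM lG g p x \<noteq> xM lG g p y"
  unfolding xM_def using lG g by (auto simp: field_simps)

lemma xM_x0: "m \<ge> 0 \<Longrightarrow> xM lG g p m \<ge> 0"
  using x_nonneg lG g by auto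

definition GG :: "nat \<Rightarrow> real \<Rightarrow> real" where
  "GG N X = real (Suc N) * (1 - RR (aN lL g (Suc N)) N X)"

lemma En_GG: "m \<ge> 0 \<Longrightarrow> En lL lG g p (Suc N) m = GG N (xM lG g p m)"
  unfolding GG_def using En_formula[of lL lG g m p N] lL lG g by auto

lemma a_nn: "aN lL g n \<ge> 0" using a_nonneg lL g by auto

lemma GG_mono: "0 \<le> X \<Longrightarrow> X \<le> Y \<Longrightarrow> GG N X \<le> GG N Y"
  unfolding GG_def using RR_props[OF a_nn, of "Suc N" N]
  by (cases "X = Y") (auto intro!: mult_left_mono less_imp_le)

lemma GG_strict:
  assumes "0 \<le> X" "0 \<le> Y" "X \<noteq> Y" "0 < t" "t < 1"
  shows "(1-t) * GG N X + t * GG N Y < GG N ((1-t)*X+t*Y)"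
proof -
  let ?R = "RR (aN lL g (Suc N)) N"
  have "?R ((1-t)*X+t*Y) < (1-t) * ?R X + t * ?R Y"
    using RR_props[OF a_nn, of "Suc N" N] assms by blast
  then have "real (Suc N) * ((1-t) * ?R X + t * ?R Y) > real (Suc N) * ?R ((1-t)*X+t*Y)"
    by (intro mult_strict_left_mono) auto
  then show ?thesis unfolding GG_def by (simp add: algebra_simps)
qed

lemma GG_conc:
  assumes "0 \<le> X" "0 \<le> Y" "0 \<le> t" "t \<le> 1"
  shows "(1-t) * GG N X + t * GG N Y \<le> GG N ((1-t)*X+t*Y)"
proof (cases "X = Y \<or> t = 0 \<or> t = 1")
  case True then show ?thesis by (auto simp: algebra_simps)
next
  case False then show ?thesis using GG_strict[of X Y t N] assms by auto
qed

lemma PP_cont: "continuous_on A (PP a N)"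
  unfolding PP_def rp_def by (intro continuous_intros)

lemma GG_cont: "continuous_on {0..} (GG N)"
proof -
  have nz: "\<forall>X\<in>{0..}. PP (aN lL g (Suc N)) (Suc N) X \<noteq> 0"
  proof
    fix X :: real assume "X \<in> {0..}"
    then have "PP (aN lL g (Suc N)) (Suc N) X \<ge> 1" by (intro PP_ge1 a_nn) auto
    then show "PP (aN lL g (Suc N)) (Suc N) X \<noteq> 0" by simp
  qed
  have "continuous_on {0..} (\<lambda>X. real (Suc N) * (1 - PP (aN lL g (Suc N)) N X / PP (aN lL g (Suc N)) (Suc N) X))"
    using nz by (intro continuous_intros PP_cont) auto
  then show ?thesis unfolding GG_def RR_def .
qed

lemma En_cont: "continuous_on {0..} (En lL lG g p n)"
proof (cases n)
  case 0
  have "En lL lG g p n = (\<lambda>_. 0)" using 0 by (auto simp: En_def fun_eq_iff)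
  then show ?thesis by (simp add: continuous_intros)
next
  case (Suc N)
  have xc: "continuous_on {0..} (xM lG g p)"
  proof -
    have "continuous_on {0..} (\<lambda>m. (lG / (pibar p * g)) * m)" by (intro continuous_intros)
    then show ?thesis unfolding xM_eq[abs_def] .
  qed
  have "continuous_on {0..} (GG N \<circ> xM lG g p)"
    by (rule continuous_on_compose[OF xc]) (rule continuous_on_subset[OF GG_cont], use xM_x0 in auto)
  then show ?thesis
    by (rule continuous_on_eq) (auto simp: En_GG Suc)
qed

lemma En_mono: "0 \<le> x \<Longrightarrow> x \<le> y \<Longrightarrow> En lL lG g p n x \<le> En lL lG g p n y"
proof (cases n)
  case 0 then show ?thesis by (simp add: En_def)
next
  case (Suc N)
  assume h: "0 \<le> x" "x \<le> y"
  then have y: "0 \<le> y" by simp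
  show ?thesis unfolding Suc En_GG[OF h(1)] En_GG[OF y]
    using h by (intro GG_mono xM_x0 xM_mono) auto
qed

lemma En_conc:
  assumes "0 \<le> x" "0 \<le> y" "0 \<le> t" "t \<le> 1"
  shows "(1-t) * En lL lG g p n x + t * En lL lG g p n y \<le> En lL lG g p n ((1-t)*x+t*y)"
proof (cases n)
  case 0 then show ?thesis by (simp add: En_def)
next
  case (Suc N)
  have z: "0 \<le> (1-t)*x+t*y" using assms by (intro add_nonneg_nonneg mult_nonneg_nonneg) auto
  show ?thesis unfolding Suc En_GG[OF assms(1)] En_GG[OF assms(2)] En_GG[OF z] xM_lin
    using GG_conc assms xM_x0 by auto
qed

lemma En_strict:
  assumes "pibar p > 0" "n \<ge> 1" "0 \<le> x" "0 \<le> y" "x \<noteq> y" "0 < t" "t < 1"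
  shows "(1-t) * En lL lG g p n x + t * En lL lG g p n y < En lL lG g p n ((1-t)*x+t*y)"
proof -
  obtain N where N: "n = Suc N" using assms(2) by (cases n) auto
  have z: "0 \<le> (1-t)*x+t*y" using assms by (intro add_nonneg_nonneg mult_nonneg_nonneg) auto
  show ?thesis unfolding N En_GG[OF assms(3)] En_GG[OF assms(4)] En_GG[OF z] xM_lin
    using GG_strict assms xM_x0 xM_inj by auto
qed

end

context
  fixes lL lG g :: real and p :: "nat pmf"
  assumes lL: "lL > 0" and lG: "lG > 0" and g: "g > 0"
    and integ: "integrable (measure_pmf p) real"
begin

lemma S1: "summable (\<lambda>n. pmf p n * real n)"
proof -
  have "summable (\<lambda>x. norm (pmf p x *\<^sub>R real x))"
    using integ by (fastforce simp add: measure_pmf_eq_density integrable_density integrable_count_space_nat_iff)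
  then show ?thesis by simp
qed

lemma En_bnd: "m \<ge> 0 \<Longrightarrow> 0 \<le> En lL lG g p n m \<and> En lL lG g p n m \<le> real n"
  using En_bounds[of lL lG g m p n] lL lG g by auto

lemma S2: "m \<ge> 0 \<Longrightarrow> summable (\<lambda>n. pmf p n * En lL lG g p n m)"
proof -
  assume m: "m \<ge> 0"
  show ?thesis
  proof (rule summable_comparison_test'[OF S1])
    fix n :: nat
    show "norm (pmf p n * En lL lG g p n m) \<le> pmf p n * real n"
      using En_bnd[OF m, of n] by (auto intro!: mult_left_mono simp: abs_mult)
  qed
qed

lemma S3:
  assumes m: "m \<ge> 0"
  shows "mubar_inf lL lG g p m = (\<Sum>n. pmf p n * En lL lG g p n m)"
proof -
  define f where "f = (\<lambda>nk. real (snd nk) * mu_inf lL lG g p m nk)"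
  have cs: "cond_stat lL lG g p n m k = 0" if "k > n" for n k
    using cond_stat_eq[of lL lG g m p n] lL lG g m that by (simp add: qs_def)
  have has: "((\<lambda>k. f (n,k)) has_sum (pmf p n * En lL lG g p n m)) UNIV" for n
  proof (rule has_sum_finite_neutralI[of "{..n}"])
    show "finite {..n}" by simp
    show "{..n} \<subseteq> UNIV" by simp
    show "f (n, k) = 0" if "k \<in> UNIV - {..n}" for k
      using that cs[of n k] by (simp add: f_def mu_inf_def)
    show "pmf p n * En lL lG g p n m = (\<Sum>k\<le>n. f (n, k))"
      by (simp add: f_def mu_inf_def En_def sum_distrib_left algebra_simps)
  qed
  have nnf: "f (n, k) \<ge> 0" for n k
  proof -
    have "cond_stat lL lG g p n m k \<ge> 0"
      using qs_stat[of lL lG g m p n] cond_stat_eq[of lL lG g m p n] lL lG g m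
      unfolding stat_iff by auto
    then show ?thesis by (simp add: f_def mu_inf_def)
  qed
  have nng: "pmf p n * En lL lG g p n m \<ge> 0" for n
    using En_bnd[OF m, of n] by simp
  have gs: "(\<lambda>n. pmf p n * En lL lG g p n m) summable_on UNIV"
    by (rule summable_nonneg_imp_summable_on[OF S2[OF m] nng])
  have fs: "f summable_on Sigma UNIV (\<lambda>_. UNIV)"
    by (rule summable_on_SigmaI[OF has gs]) (use nnf in auto)
  have "mubar_inf lL lG g p m = infsum f (Sigma UNIV (\<lambda>_. UNIV))"
    unfolding mubar_inf_def f_def by simp
  also have "\<dots> = infsum (\<lambda>n. infsum (\<lambda>k. f (n,k)) UNIV) UNIV"
    by (rule infsum_Sigma_banach[OF fs, symmetric])
  also have "\<dots> = infsum (\<lambda>n. pmf p n * En lL lG g p n m) UNIV"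
    by (intro infsum_cong infsumI has)
  also have "\<dots> = (\<Sum>n. pmf p n * En lL lG g p n m)"
    by (rule infsumI, rule sums_nonneg_imp_has_sum[OF summable_sums[OF S2[OF m]] nng])
  finally show ?thesis .
qed

lemma S4:
  assumes "pibar p > 0"
  shows "\<exists>n. n \<ge> 1 \<and> pmf p n > 0"
proof (rule ccontr)
  assume "\<not> ?thesis"
  then have h0: "\<And>n. n \<ge> 1 \<Longrightarrow> pmf p n = 0" by (auto simp: less_le pmf_nonneg)
  have h: "n = 0" if "n \<in> set_pmf p" for n
  proof (rule ccontr)
    assume "n \<noteq> 0"
    then have "pmf p n = 0" using h0 by simp
    then show False using that by (simp add: set_pmf_eq)
  qed
  have "pibar p = (\<Sum>a\<in>{0::nat}. pmf p a *\<^sub>R real a)"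
    unfolding pibar_def by (rule integral_measure_pmf) (use h in auto)
  then show False using assms by simp
qed

end

theorem lemma7p3:
  fixes lL lG g :: real and p :: "nat pmf"
  assumes "lL > 0" and "lG > 0" and "g > 0"
    and "integrable (measure_pmf p) real"
  shows "continuous_on {0..pibar p} (mubar_inf lL lG g p)
       \<and> mono_on {0..pibar p} (mubar_inf lL lG g p)
       \<and> strict_concave_on {0..pibar p} (mubar_inf lL lG g p)"
proof -
  note A = assms
  define E where "E = En lL lG g p"
  define S where "S = (\<lambda>m. \<Sum>n. pmf p n * E n m)"
  let ?A = "{0..pibar p}"
  have SM: "mubar_inf lL lG g p m = S m" if "m \<in> ?A" for m
    using S3[OF A, of m] that unfolding S_def E_def by auto
  have summ: "summable (\<lambda>n. pmf p n * E n m)" if "m \<ge> 0" for m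
    using S2[OF A that] unfolding E_def .
  have bnd: "0 \<le> E n m \<and> E n m \<le> real n" if "m \<ge> 0" for n m
    using En_bnd[OF A that] unfolding E_def .
  have cont: "continuous_on ?A S"
    unfolding S_def
  proof (rule uniform_limit_theorem[where F=sequentially and f="\<lambda>N m. \<Sum>n<N. pmf p n * E n m"])
    show "\<forall>\<^sub>F N in sequentially. continuous_on ?A (\<lambda>m. \<Sum>n<N. pmf p n * E n m)"
    proof (rule always_eventually, rule allI)
      fix N
      show "continuous_on ?A (\<lambda>m. \<Sum>n<N. pmf p n * E n m)"
      proof (intro continuous_on_sum continuous_on_mult_left)
        fix n
        show "continuous_on ?A (E n)"
          unfolding E_def by (rule continuous_on_subset[OF En_cont[OF A(1-3)]]) auto
      qed
    qed
    show "uniform_limit ?A (\<lambda>N m. \<Sum>n<N. pmf p n * E n m) (\<lambda>m. \<Sum>n. pmf p n * E n m) sequentially"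
    proof (rule Weierstrass_m_test[OF _ S1[OF A]])
      fix n m assume "m \<in> ?A"
      then have "m \<ge> 0" by simp
      then show "norm (pmf p n * E n m) \<le> pmf p n * real n"
        using bnd[of m n] by (auto intro!: mult_left_mono simp: abs_mult)
    qed
    show "\<not> trivial_limit sequentially" by simp
  qed
  have c1: "continuous_on ?A (mubar_inf lL lG g p)"
    by (rule continuous_on_eq[OF cont]) (use SM in auto)
  have c2: "mono_on ?A (mubar_inf lL lG g p)"
  proof (rule mono_onI)
    fix r s assume h: "r \<in> ?A" "s \<in> ?A" "r \<le> s"
    have "S r \<le> S s"
      unfolding S_def using h
      by (intro suminf_le summ mult_left_mono) (auto simp: E_def intro: En_mono[OF A(1-3)])
    then show "mubar_inf lL lG g p r \<le> mubar_inf lL lG g p s" using SM h by simp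
  qed
  have c3: "strict_concave_on ?A (mubar_inf lL lG g p)"
    unfolding strict_concave_on_def
  proof (intro conjI ballI impI allI)
    show "convex ?A" by (rule convex_real_interval)
    fix x y t :: real assume hx: "x \<in> ?A" and hy: "y \<in> ?A" and xy: "x \<noteq> y" and ht: "0 < t \<and> t < 1"
    have x0: "x \<ge> 0" and y0: "y \<ge> 0" using hx hy by auto
    define z where "z = (1 - t) * x + t * y"
    have z0: "z \<ge> 0" unfolding z_def using x0 y0 ht by (intro add_nonneg_nonneg mult_nonneg_nonneg) auto
    have zA: "z \<in> ?A"
    proof -
      have "convex ?A" by (rule convex_real_interval)
      then show ?thesis unfolding z_def using hx hy ht by (simp add: convex_alt)
    qed
    have pb: "pibar p > 0" using hx hy xy by auto
    obtain n0 where n0: "n0 \<ge> 1" "pmf p n0 > 0" using S4[OF A pb] by blast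
    define D where "D n = pmf p n * E n z - ((1-t) * (pmf p n * E n x) + t * (pmf p n * E n y))" for n
    have sumsD: "D sums (S z - ((1-t) * S x + t * S y))"
      unfolding D_def S_def by (intro sums_diff sums_add sums_mult summable_sums summ x0 y0 z0)
    have sD: "summable D" using sumsD by (rule sums_summable)
    have eD: "suminf D = S z - ((1-t) * S x + t * S y)" using sumsD by (rule sums_unique[symmetric])
    have Dn: "D n \<ge> 0" for n
    proof -
      have "(1-t) * E n x + t * E n y \<le> E n z"
        unfolding E_def z_def using En_conc[OF A(1-3) x0 y0, where t=t and n=n and p=p] ht by auto
      then have "pmf p n * ((1-t) * E n x + t * E n y) \<le> pmf p n * E n z"
        by (intro mult_left_mono) auto
      then show ?thesis unfolding D_def by (simp add: algebra_simps)
    qed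
    have Dp: "D n0 > 0"
    proof -
      have "(1-t) * E n0 x + t * E n0 y < E n0 z"
        unfolding E_def z_def using En_strict[OF A(1-3) pb n0(1) x0 y0 xy, where t=t] ht by auto
      then have "pmf p n0 * ((1-t) * E n0 x + t * E n0 y) < pmf p n0 * E n0 z"
        using n0 by (intro mult_strict_left_mono) auto
      then show ?thesis unfolding D_def by (simp add: algebra_simps)
    qed
    have "suminf D > 0" by (rule suminf_pos2[OF sD Dn Dp])
    then have "S z > (1-t) * S x + t * S y" using eD by simp
    then show "mubar_inf lL lG g p ((1 - t) * x + t * y) > (1 - t) * mubar_inf lL lG g p x + t * mubar_inf lL lG g p y"
      using SM hx hy zA unfolding z_def by simp
  qed
  show ?thesis using c1 c2 c3 by blast
qed

end
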